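(* In a network satisfying (H1) and (H2), let $Y+S_0\rightleftarrows U_1\to Y+S_1\rightleftarrows\cdots\rightleftarrows U_L\to Y+S_L$ ($L\ge1$) be a connected component with rate constants $a_j,b_j,c_j$ as in the context. Fix $1\le n\le L$ and $0\le k\le n-1$. Let $\ell$ be the minimal positive integer such that a monomial $y^r u_{n-k}$ with some $r\ge0$ appears in $s_n^{(\ell)}$. Then $\ell=2k+1$, $r=k$, and the coefficient of $y^k u_{n-k}$ in $s_n^{(2k+1)}$ is \[c_{n-k}\prod_{j=0}^{k-1}a_{n-j}\,c_{n-j}\] (the empty product being $1$).
   Context: Species are capital letters, concentrations lower-case letters. Mass-action system: $\dot{\mathbf{x}}=\sum_{y\to y'}k_{yy'}\mathbf{x}^y(y'-y)$, rates $k_{yy'}>0$. Total derivative: $\dot\varphi=\sum_i\frac{\partial\varphi}{\partial x_i}\dot x_i$ with $\dot x_i$ replaced by the right-hand side; $\varphi^{(\ell)}$ the $\ell$-th iterate, a polynomial in concentrations with coefficients polynomial in the rate constants; a monomial appears if its coefficient is nonzero. (H1) Every connected component has the form $Y+S_0\rightleftarrows U_1\to\cdots\rightleftarrows U_L\to Y+S_L$: reactions $Y+S_{j-1}\to U_j$ (rate $a_j$), $U_j\to Y+S_{j-1}$ (rate $b_j$), $U_j\to Y+S_j$ (rate $c_j$); unique enzyme $Y$; intermediates distinct throughout the network; non-intermediates of a component pairwise distinct but may appear in other components; each complex in a unique component. $\mathscr{S}_U$ = substrates/products of the component of intermediate $U$. (H2) A partition $\mathscr{S}^{(0)}\sqcup\cdots\sqcup\mathscr{S}^{(M)}$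 ($M\ge2$, nonempty, $\mathscr{S}^{(0)}$ the intermediates) with: for each intermediate $U$ with enzyme $Y$, some $\alpha\ge1$ has $\mathscr{S}_U\subseteq\mathscr{S}^{(\alpha)}$, $Y\notin\mathscr{S}^{(\alpha)}$. *)

theory Defs
  imports Complex_Main "HOL-Library.Poly_Mapping"
begin

text \<open>Complexes are finitely supported multisets of species ('s \<Rightarrow>0 nat).
Polynomials in the concentrations are finitely supported maps from monomials
(exponent vectors, again 's \<Rightarrow>0 nat) to real coefficients.\<close>

type_synonym 's cplx = "'s \<Rightarrow>\<^sub>0 nat"
type_synonym 's mpoly = "('s \<Rightarrow>\<^sub>0 nat) \<Rightarrow>\<^sub>0 real"

definition var :: "'s \<Rightarrow> 's mpoly" where
  "var s = Poly_Mapping.single (Poly_Mapping.single s 1) 1"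

definition coeff :: "'s mpoly \<Rightarrow> ('s \<Rightarrow>\<^sub>0 nat) \<Rightarrow> real" where
  "coeff p m = Poly_Mapping.lookup p m"

definition pderiv_var :: "'s \<Rightarrow> 's mpoly \<Rightarrow> 's mpoly" where
  "pderiv_var i p = (\<Sum>m\<in>Poly_Mapping.keys p.
     Poly_Mapping.single (m - Poly_Mapping.single i 1) (real (Poly_Mapping.lookup m i) * Poly_Mapping.lookup p m))"

definition species :: "('s cplx \<times> 's cplx) set \<Rightarrow> 's set" where
  "species R = (\<Union>(y, y')\<in>R. Poly_Mapping.keys y \<union> Poly_Mapping.keys y')"

definition ma_rhs :: "('s cplx \<times> 's cplx) set \<Rightarrow> ('s cplx \<times> 's cplx \<Rightarrow> real) \<Rightarrow> 's \<Rightarrow> 's mpoly" where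
  "ma_rhs R k i = (\<Sum>(y, y')\<in>R.
     Poly_Mapping.single y (k (y, y') * (real (Poly_Mapping.lookup y' i) - real (Poly_Mapping.lookup y i))))"

text \<open>Total derivative along the mass-action system. Summing over the species of the
network suffices for polynomials in those species; for species outside the network the
right-hand side is zero anyway.\<close>
definition total_deriv :: "('s cplx \<times> 's cplx) set \<Rightarrow> ('s cplx \<times> 's cplx \<Rightarrow> real) \<Rightarrow> 's mpoly \<Rightarrow> 's mpoly" where
  "total_deriv R k p = (\<Sum>i\<in>species R. pderiv_var i p * ma_rhs R k i)"

definition cpair :: "'s \<Rightarrow> 's \<Rightarrow> 's cplx" where
  "cpair Y S = Poly_Mapping.single Y 1 + Poly_Mapping.single S 1"

definition csing :: "'s \<Rightarrow> 's cplx" where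
  "csing U = Poly_Mapping.single U 1"

text \<open>Reactions of the network built from components indexed by C: component c has
enzyme E c, substrates/products Sb c 0, ..., Sb c (L c), intermediates Ui c 1, ..., Ui c (L c).\<close>
definition chain_network ::
  "'c set \<Rightarrow> ('c \<Rightarrow> 's) \<Rightarrow> ('c \<Rightarrow> nat) \<Rightarrow> ('c \<Rightarrow> nat \<Rightarrow> 's) \<Rightarrow> ('c \<Rightarrow> nat \<Rightarrow> 's)
    \<Rightarrow> ('s cplx \<times> 's cplx) set" where
  "chain_network C E L Sb Ui = (\<Union>c\<in>C. \<Union>j\<in>{1..L c}.
      {(cpair (E c) (Sb c (j - 1)), csing (Ui c j)),
       (csing (Ui c j), cpair (E c) (Sb c (j - 1))),
       (csing (Ui c j), cpair (E c) (Sb c j))})"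

definition H1 ::
  "'c set \<Rightarrow> ('c \<Rightarrow> 's) \<Rightarrow> ('c \<Rightarrow> nat) \<Rightarrow> ('c \<Rightarrow> nat \<Rightarrow> 's) \<Rightarrow> ('c \<Rightarrow> nat \<Rightarrow> 's) \<Rightarrow> bool" where
  "H1 C E L Sb Ui \<longleftrightarrow>
     finite C \<and>
     (\<forall>c\<in>C. L c \<ge> 1) \<and>
     \<comment> \<open>intermediates are distinct throughout the network\<close>
     inj_on (\<lambda>(c, j). Ui c j) {(c, j). c \<in> C \<and> j \<in> {1..L c}} \<and>
     \<comment> \<open>intermediates are not enzymes or substrates/products of any component\<close>
     (\<forall>c\<in>C. \<forall>j\<in>{1..L c}. \<forall>c'\<in>C. Ui c j \<noteq> E c' \<and> Ui c j \<notin> Sb c' ` {0..L c'}) \<and>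
     \<comment> \<open>non-intermediates of a component are pairwise distinct\<close>
     (\<forall>c\<in>C. inj_on (Sb c) {0..L c} \<and> E c \<notin> Sb c ` {0..L c}) \<and>
     \<comment> \<open>each complex lies in a unique component\<close>
     (\<forall>c\<in>C. \<forall>c'\<in>C. \<forall>j\<in>{0..L c}. \<forall>j'\<in>{0..L c'}.
         c \<noteq> c' \<longrightarrow> cpair (E c) (Sb c j) \<noteq> cpair (E c') (Sb c' j'))"

definition H2 ::
  "'c set \<Rightarrow> ('c \<Rightarrow> 's) \<Rightarrow> ('c \<Rightarrow> nat) \<Rightarrow> ('c \<Rightarrow> nat \<Rightarrow> 's) \<Rightarrow> ('c \<Rightarrow> nat \<Rightarrow> 's) \<Rightarrow> bool" where
  "H2 C E L Sb Ui \<longleftrightarrow>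
     (\<exists>M::nat. \<exists>cls :: 's \<Rightarrow> nat. M \<ge> 2 \<and>
        cls ` species (chain_network C E L Sb Ui) = {0..M} \<and>
        (\<forall>v\<in>species (chain_network C E L Sb Ui).
            cls v = 0 \<longleftrightarrow> (\<exists>c\<in>C. \<exists>j\<in>{1..L c}. v = Ui c j)) \<and>
        (\<forall>c\<in>C. \<exists>\<alpha>\<ge>1. (\<forall>j\<in>{0..L c}. cls (Sb c j) = \<alpha>) \<and> cls (E c) \<noteq> \<alpha>))"

end

theory Submission
  imports Defs
begin

lemma lookup_mult_single:
  fixes q :: "('s \<Rightarrow>\<^sub>0 nat) \<Rightarrow>\<^sub>0 real"
  shows "Poly_Mapping.lookup (q * Poly_Mapping.single y w) T =
     (if (\<exists>l. T = l + y) then Poly_Mapping.lookup q (T - y) * w else 0)"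
proof -
  have "Poly_Mapping.lookup (q * Poly_Mapping.single y w) T =
     (\<Sum>l. Poly_Mapping.lookup q l * (w when T = l + y))"
  proof -
    have "\<And>a. (\<Sum>aa. w when y = aa \<and> T = a + aa) = (w when T = a + y)"
    proof -
      fix a
      have "(\<Sum>aa. w when y = aa \<and> T = a + aa) = (\<Sum>aa. (w when T = a + aa) when y = aa)"
        by (simp add: when_when conj_commute)
      then show "(\<Sum>aa. w when y = aa \<and> T = a + aa) = (w when T = a + y)" by simp
    qed
    then show ?thesis unfolding lookup_mult lookup_single
      by (simp add: when_when conj_commute)
  qed
  also have "\<dots> = (\<Sum>l. (Poly_Mapping.lookup q l * w) when l = T - y \<and> (\<exists>l. T = l + y))"
    by (rule Sum_any.cong) (auto simp: when_def)
  also have "\<dots> = (if (\<exists>l. T = l + y) then Poly_Mapping.lookup q (T - y) * w else 0)"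
    by (cases "\<exists>l. T = l + y") (simp_all add: when_def)
  finally show ?thesis .
qed

lemma lookup_pderiv_var:
  "Poly_Mapping.lookup (pderiv_var i p) N =
     real (Poly_Mapping.lookup N i + 1) * Poly_Mapping.lookup p (N + Poly_Mapping.single i 1)"
proof -
  let ?e = "Poly_Mapping.single i (1::nat)"
  have hterm: "(real (Poly_Mapping.lookup m i) * Poly_Mapping.lookup p m when m - ?e = N)
     = (if m = N + ?e then real (Poly_Mapping.lookup m i) * Poly_Mapping.lookup p m else 0)" for m
  proof (cases "Poly_Mapping.lookup m i = 0")
    case True
    have "m \<noteq> N + ?e"
    proof
      assume "m = N + ?e"
      then have "Poly_Mapping.lookup m i = Poly_Mapping.lookup N i + 1"
        by (simp add: lookup_add)
      with True show False by simp
    qed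
    with True show ?thesis by (simp add: when_def)
  next
    case False
    have "m - ?e = N \<longleftrightarrow> m = N + ?e"
    proof
      assume "m - ?e = N"
      then show "m = N + ?e"
        using False by (auto intro!: poly_mapping_eqI simp: lookup_add lookup_minus lookup_single when_def)
    next
      assume "m = N + ?e"
      then show "m - ?e = N"
        by (auto intro!: poly_mapping_eqI simp: lookup_add lookup_minus lookup_single when_def)
    qed
    then show ?thesis by (simp add: when_def)
  qed
  have "Poly_Mapping.lookup (pderiv_var i p) N =
     (\<Sum>m\<in>Poly_Mapping.keys p. if m = N + ?e then real (Poly_Mapping.lookup m i) * Poly_Mapping.lookup p m else 0)"
    unfolding pderiv_var_def lookup_sum lookup_single using hterm by simp
  also have "\<dots> = (if N + ?e \<in> Poly_Mapping.keys p then real (Poly_Mapping.lookup (N + ?e) i) * Poly_Mapping.lookup p (N + ?e) else 0)"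
    by (simp add: sum.delta')
  also have "\<dots> = real (Poly_Mapping.lookup N i + 1) * Poly_Mapping.lookup p (N + ?e)"
    by (auto simp: lookup_add in_keys_iff)
  finally show ?thesis .
qed


lemma lookup_total_deriv:
  "Poly_Mapping.lookup (total_deriv R \<kappa> p) T =
    (\<Sum>r\<in>R. if (\<exists>l. T = l + fst r) then \<kappa> r *
       (\<Sum>i\<in>species R. real (Poly_Mapping.lookup (T - fst r) i + 1)
           * Poly_Mapping.lookup p (T - fst r + Poly_Mapping.single i 1)
           * (real (Poly_Mapping.lookup (snd r) i) - real (Poly_Mapping.lookup (fst r) i)))
      else 0)"
proof -
  have "Poly_Mapping.lookup (total_deriv R \<kappa> p) T =
    (\<Sum>i\<in>species R. \<Sum>r\<in>R. if (\<exists>l. T = l + fst r) then 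
        real (Poly_Mapping.lookup (T - fst r) i + 1)
           * Poly_Mapping.lookup p (T - fst r + Poly_Mapping.single i 1)
           * (\<kappa> r * (real (Poly_Mapping.lookup (snd r) i) - real (Poly_Mapping.lookup (fst r) i)))
      else 0)"
    unfolding total_deriv_def ma_rhs_def lookup_sum sum_distrib_left
    apply (simp add: case_prod_beta lookup_mult_single)
    apply (rule sum.cong, rule refl, rule sum.cong, rule refl)
    apply (simp only: lookup_pderiv_var)
    done
  also have "\<dots> = (\<Sum>r\<in>R. \<Sum>i\<in>species R. if (\<exists>l. T = l + fst r) then 
        real (Poly_Mapping.lookup (T - fst r) i + 1)
           * Poly_Mapping.lookup p (T - fst r + Poly_Mapping.single i 1)
           * (\<kappa> r * (real (Poly_Mapping.lookup (snd r) i) - real (Poly_Mapping.lookup (fst r) i)))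
      else 0)"
    by (rule sum.swap)
  also have "\<dots> = (\<Sum>r\<in>R. if (\<exists>l. T = l + fst r) then \<kappa> r *
       (\<Sum>i\<in>species R. real (Poly_Mapping.lookup (T - fst r) i + 1)
           * Poly_Mapping.lookup p (T - fst r + Poly_Mapping.single i 1)
           * (real (Poly_Mapping.lookup (snd r) i) - real (Poly_Mapping.lookup (fst r) i)))
      else 0)"
    by (rule sum.cong[OF refl]) (auto simp: sum_distrib_left mult_ac)
  finally show ?thesis .
qed

lemma sum_single_real:
  assumes "finite A" "a \<in> A"
  shows "(\<Sum>i\<in>A. h i * real (Poly_Mapping.lookup (Poly_Mapping.single a (1::nat)) i)) = h a"
proof -
  have "(\<Sum>i\<in>A. h i * real (Poly_Mapping.lookup (Poly_Mapping.single a (1::nat)) i)) = (\<Sum>i\<in>A. if a = i then h i else 0)"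
    by (rule sum.cong) (auto simp: lookup_single when_def)
  then show ?thesis using assms by (simp add: sum.delta)
qed

lemma lookup_cpair: "Poly_Mapping.lookup (cpair A B) i =
   Poly_Mapping.lookup (Poly_Mapping.single A 1) i + Poly_Mapping.lookup (Poly_Mapping.single B 1) i"
  by (simp add: cpair_def lookup_add)

lemma react_sum_U_pair:
  assumes "finite A" "U \<in> A" "Y \<in> A" "S \<in> A"
  shows "(\<Sum>i\<in>A. h i * (real (Poly_Mapping.lookup (cpair Y S) i) - real (Poly_Mapping.lookup (csing U) i)))
     = h Y + h S - h U"
proof -
  have "(\<Sum>i\<in>A. h i * (real (Poly_Mapping.lookup (cpair Y S) i) - real (Poly_Mapping.lookup (csing U) i)))
     = (\<Sum>i\<in>A. h i * real (Poly_Mapping.lookup (Poly_Mapping.single Y (1::nat)) i))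
     + (\<Sum>i\<in>A. h i * real (Poly_Mapping.lookup (Poly_Mapping.single S (1::nat)) i))
     - (\<Sum>i\<in>A. h i * real (Poly_Mapping.lookup (Poly_Mapping.single U (1::nat)) i))"
    by (simp add: lookup_cpair csing_def algebra_simps sum.distrib sum_subtractf)
  also have "\<dots> = h Y + h S - h U" using assms by (simp only: sum_single_real)
  finally show ?thesis .
qed

lemma react_sum_pair_U:
  assumes "finite A" "U \<in> A" "Y \<in> A" "S \<in> A"
  shows "(\<Sum>i\<in>A. h i * (real (Poly_Mapping.lookup (csing U) i) - real (Poly_Mapping.lookup (cpair Y S) i)))
     = h U - h Y - h S"
proof -
  have "(\<Sum>i\<in>A. h i * (real (Poly_Mapping.lookup (csing U) i) - real (Poly_Mapping.lookup (cpair Y S) i)))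
     = (\<Sum>i\<in>A. h i * real (Poly_Mapping.lookup (Poly_Mapping.single U (1::nat)) i))
     - (\<Sum>i\<in>A. h i * real (Poly_Mapping.lookup (Poly_Mapping.single Y (1::nat)) i))
     - (\<Sum>i\<in>A. h i * real (Poly_Mapping.lookup (Poly_Mapping.single S (1::nat)) i))"
    by (simp add: lookup_cpair csing_def algebra_simps sum.distrib sum_subtractf)
  also have "\<dots> = h U - h Y - h S" using assms by (simp only: sum_single_real)
  finally show ?thesis .
qed


lemma ex_le_lookup:
  assumes "\<exists>l. T = l + (y :: 's \<Rightarrow>\<^sub>0 nat)"
  shows "Poly_Mapping.lookup y X \<le> Poly_Mapping.lookup T X"
  using assms by (auto simp: lookup_add)

lemma csing_le:
  assumes "\<exists>l. Poly_Mapping.single Y a + Poly_Mapping.single v 1 = l + csing V"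
  shows "V = v \<or> (V = Y \<and> 1 \<le> a)"
  using ex_le_lookup[OF assms, of V]
  by (auto simp: csing_def lookup_add lookup_single when_def split: if_splits)

lemma cpair_le:
  assumes "\<exists>l. Poly_Mapping.single Y a + Poly_Mapping.single v 1 = l + cpair A B"
    and "A \<noteq> B" "v \<noteq> Y"
  shows "1 \<le> a \<and> ((A = Y \<and> B = v) \<or> (A = v \<and> B = Y))"
  using ex_le_lookup[OF assms(1), of A] ex_le_lookup[OF assms(1), of B] assms(2,3)
  by (auto simp: cpair_def lookup_add lookup_single when_def split: if_splits)

lemma single_Y_le:
  assumes "\<exists>l. Poly_Mapping.single Y (b::nat) = l + (y :: 's \<Rightarrow>\<^sub>0 nat)" "1 \<le> Poly_Mapping.lookup y X"
  shows "X = Y"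
  using ex_le_lookup[OF assms(1), of X] assms(2)
  by (auto simp: lookup_single when_def split: if_splits)

lemma cpair_eq_iff: "cpair A B = cpair A' B' \<longleftrightarrow> (A = A' \<and> B = B') \<or> (A = B' \<and> B = A')"
proof
  assume h: "cpair A B = cpair A' B'"
  have "\<And>X. Poly_Mapping.lookup (cpair A B) X = Poly_Mapping.lookup (cpair A' B') X"
    using h by simp
  from this[of A] this[of B] this[of A'] show "(A = A' \<and> B = B') \<or> (A = B' \<and> B = A')"
    by (auto simp: cpair_def lookup_add lookup_single when_def split: if_splits)
next
  assume "(A = A' \<and> B = B') \<or> (A = B' \<and> B = A')"
  then show "cpair A B = cpair A' B'" by (auto simp: cpair_def add.commute)
qed

locale chainctx =
  fixes C :: "'c set" and E :: "'c \<Rightarrow> 's" and L :: "'c \<Rightarrow> nat"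
    and Sb Ui :: "'c \<Rightarrow> nat \<Rightarrow> 's" and \<kappa> :: "'s cplx \<times> 's cplx \<Rightarrow> real" and c0 :: 'c
  assumes h1: "H1 C E L Sb Ui" and c0: "c0 \<in> C"
begin

abbreviation "R \<equiv> chain_network C E L Sb Ui"

lemma finC: "finite C" using h1 by (simp add: H1_def)

lemma ui_inj: "c \<in> C \<Longrightarrow> c' \<in> C \<Longrightarrow> 1 \<le> j \<Longrightarrow> j \<le> L c \<Longrightarrow> 1 \<le> j' \<Longrightarrow> j' \<le> L c'
   \<Longrightarrow> Ui c j = Ui c' j' \<Longrightarrow> c = c' \<and> j = j'"
  using h1 unfolding H1_def inj_on_def by fastforce

lemma ui_ne_E: "c \<in> C \<Longrightarrow> 1 \<le> j \<Longrightarrow> j \<le> L c \<Longrightarrow> c' \<in> C \<Longrightarrow> Ui c j \<noteq> E c'"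
  using h1 unfolding H1_def by auto

lemma ui_ne_Sb: "c \<in> C \<Longrightarrow> 1 \<le> j \<Longrightarrow> j \<le> L c \<Longrightarrow> c' \<in> C \<Longrightarrow> j' \<le> L c' \<Longrightarrow> Ui c j \<noteq> Sb c' j'"
  using h1 unfolding H1_def by fastforce

lemma sb_inj: "c \<in> C \<Longrightarrow> i \<le> L c \<Longrightarrow> j \<le> L c \<Longrightarrow> Sb c i = Sb c j \<Longrightarrow> i = j"
  using h1 unfolding H1_def inj_on_def by auto

lemma E_ne_Sb: "c \<in> C \<Longrightarrow> j \<le> L c \<Longrightarrow> E c \<noteq> Sb c j"
  using h1 unfolding H1_def by auto

lemma cpair_uniq: "c \<in> C \<Longrightarrow> c' \<in> C \<Longrightarrow> j \<le> L c \<Longrightarrow> j' \<le> L c' \<Longrightarrow>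
   cpair (E c) (Sb c j) = cpair (E c') (Sb c' j') \<Longrightarrow> c = c'"
  using h1 unfolding H1_def by fastforce

lemma finR: "finite R"
  unfolding chain_network_def using finC by auto

lemma memR: "r \<in> R \<longleftrightarrow> (\<exists>c\<in>C. \<exists>j. 1 \<le> j \<and> j \<le> L c \<and>
   (r = (cpair (E c) (Sb c (j - 1)), csing (Ui c j)) \<or>
    r = (csing (Ui c j), cpair (E c) (Sb c (j - 1))) \<or>
    r = (csing (Ui c j), cpair (E c) (Sb c j))))"
  unfolding chain_network_def by (simp only: UN_iff atLeastAtMost_iff insert_iff empty_iff Bex_def) blast

lemma finSp: "finite (species R)"
  unfolding species_def using finR by auto

lemma in_species: "(y, y') \<in> R \<Longrightarrow> Poly_Mapping.lookup y x \<noteq> 0 \<or> Poly_Mapping.lookup y' x \<noteq> 0 \<Longrightarrow> x \<in> species R"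
  unfolding species_def by (auto simp: in_keys_iff intro!: bexI[where x="(y,y')"])


lemma lk_cpair1: "Poly_Mapping.lookup (cpair A B) A \<noteq> 0" "1 \<le> Poly_Mapping.lookup (cpair A B) A"
  by (simp_all add: cpair_def lookup_add)
lemma lk_cpair2: "Poly_Mapping.lookup (cpair A B) B \<noteq> 0" "1 \<le> Poly_Mapping.lookup (cpair A B) B"
  by (simp_all add: cpair_def lookup_add)
lemma lk_csing: "Poly_Mapping.lookup (csing U) U \<noteq> 0" "1 \<le> Poly_Mapping.lookup (csing U) U"
  by (simp_all add: csing_def)

lemma FY: "Poly_Mapping.lookup (total_deriv R \<kappa> p) (Poly_Mapping.single (E c0) b) = 0"
proof -
  have "\<forall>r\<in>R. \<not>(\<exists>l. Poly_Mapping.single (E c0) b = l + fst r)"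
  proof
    fix r assume "r \<in> R"
    then obtain c j where c: "c \<in> C" "1 \<le> j" "j \<le> L c" and
      r: "r = (cpair (E c) (Sb c (j - 1)), csing (Ui c j)) \<or>
          r = (csing (Ui c j), cpair (E c) (Sb c (j - 1))) \<or>
          r = (csing (Ui c j), cpair (E c) (Sb c j))" using memR by blast
    show "\<not>(\<exists>l. Poly_Mapping.single (E c0) b = l + fst r)"
    proof
      assume cond: "\<exists>l. Poly_Mapping.single (E c0) b = l + fst r"
      from r show False
      proof (elim disjE)
        assume rr: "r = (cpair (E c) (Sb c (j - 1)), csing (Ui c j))"
        have e1: "E c = E c0" using single_Y_le[OF cond[unfolded rr fst_conv] lk_cpair1(2)] .
        have e2: "Sb c (j - 1) = E c0" using single_Y_le[OF cond[unfolded rr fst_conv] lk_cpair2(2)] .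
        have jl': "j - 1 \<le> L c" using c by linarith
        show False using E_ne_Sb[OF c(1) jl'] e1 e2 by simp
      next
        assume rr: "r = (csing (Ui c j), cpair (E c) (Sb c (j - 1)))"
        have "Ui c j = E c0" using single_Y_le[OF cond[unfolded rr fst_conv] lk_csing(2)] .
        then show False using ui_ne_E[OF c c0] by simp
      next
        assume rr: "r = (csing (Ui c j), cpair (E c) (Sb c j))"
        have "Ui c j = E c0" using single_Y_le[OF cond[unfolded rr fst_conv] lk_csing(2)] .
        then show False using ui_ne_E[OF c c0] by simp
      qed
    qed
  qed
  then show ?thesis by (simp add: lookup_total_deriv)
qed

lemma sum_if_filter: "finite A \<Longrightarrow> (\<Sum>r\<in>A. if P r then g r else 0) = (\<Sum>r\<in>{r\<in>A. P r}. g r)"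
  by (simp add: sum.inter_filter)

lemma FU:
  assumes j: "1 \<le> j" "j \<le> L c0" and pY: "\<forall>b. Poly_Mapping.lookup p (Poly_Mapping.single (E c0) b) = 0"
  shows "Poly_Mapping.lookup (total_deriv R \<kappa> p) (Poly_Mapping.single (E c0) a + Poly_Mapping.single (Ui c0 j) 1) =
     \<kappa> (csing (Ui c0 j), cpair (E c0) (Sb c0 (j - 1))) *
        (Poly_Mapping.lookup p (Poly_Mapping.single (E c0) a + Poly_Mapping.single (Sb c0 (j - 1)) 1)
         - Poly_Mapping.lookup p (Poly_Mapping.single (E c0) a + Poly_Mapping.single (Ui c0 j) 1))
   + \<kappa> (csing (Ui c0 j), cpair (E c0) (Sb c0 j)) *
        (Poly_Mapping.lookup p (Poly_Mapping.single (E c0) a + Poly_Mapping.single (Sb c0 j) 1)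
         - Poly_Mapping.lookup p (Poly_Mapping.single (E c0) a + Poly_Mapping.single (Ui c0 j) 1))"
proof -
  define Y where "Y = E c0"
  define U where "U = Ui c0 j"
  define S1 where "S1 = Sb c0 (j - 1)"
  define S2 where "S2 = Sb c0 j"
  define T where "T = Poly_Mapping.single Y a + Poly_Mapping.single U (1::nat)"
  define r1 where "r1 = (csing U, cpair Y S1)"
  define r2 where "r2 = (csing U, cpair Y S2)"
  define g where "g r = \<kappa> r *
       (\<Sum>i\<in>species R. real (Poly_Mapping.lookup (T - fst r) i + 1)
           * Poly_Mapping.lookup p (T - fst r + Poly_Mapping.single i 1)
           * (real (Poly_Mapping.lookup (snd r) i) - real (Poly_Mapping.lookup (fst r) i)))" for r
  define h where "h i = real (Poly_Mapping.lookup (Poly_Mapping.single Y a) i + 1)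
           * Poly_Mapping.lookup p (Poly_Mapping.single Y a + Poly_Mapping.single i 1)" for i
  have UY: "U \<noteq> Y" unfolding U_def Y_def using ui_ne_E[OF c0 j c0] .
  have jl: "j - 1 \<le> L c0" using j by linarith
  have S1Y: "S1 \<noteq> Y" unfolding S1_def Y_def using E_ne_Sb[OF c0 jl] by (rule not_sym)
  have S2Y: "S2 \<noteq> Y" unfolding S2_def Y_def using E_ne_Sb[OF c0 j(2)] by (rule not_sym)
  have r1R: "r1 \<in> R" unfolding r1_def U_def Y_def S1_def memR using c0 j by blast
  have r2R: "r2 \<in> R" unfolding r2_def U_def Y_def S2_def memR using c0 j by blast
  have sp1: "U \<in> species R" using in_species[OF r1R[unfolded r1_def], of U] lk_csing(1)[of U] by simp
  have sp2: "Y \<in> species R" using in_species[OF r1R[unfolded r1_def], of Y] lk_cpair1(1)[of Y S1] by simp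
  have sp3: "S1 \<in> species R" using in_species[OF r1R[unfolded r1_def], of S1] lk_cpair2(1)[of Y S1] by simp
  have sp4: "S2 \<in> species R" using in_species[OF r2R[unfolded r2_def], of S2] lk_cpair2(1)[of Y S2] by simp
  note sp = sp1 sp2 sp3 sp4
  have set: "{r\<in>R. \<exists>l. T = l + fst r} = {r1, r2}"
  proof
    show "{r1, r2} \<subseteq> {r\<in>R. \<exists>l. T = l + fst r}"
      using r1R r2R unfolding r1_def r2_def T_def csing_def by auto
  next
    show "{r\<in>R. \<exists>l. T = l + fst r} \<subseteq> {r1, r2}"
    proof
      fix r assume "r \<in> {r\<in>R. \<exists>l. T = l + fst r}"
      then have rR: "r \<in> R" and cond: "\<exists>l. T = l + fst r" by auto
      then obtain c j' where c: "c \<in> C" "1 \<le> j'" "j' \<le> L c" and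
        r: "r = (cpair (E c) (Sb c (j' - 1)), csing (Ui c j')) \<or>
            r = (csing (Ui c j'), cpair (E c) (Sb c (j' - 1))) \<or>
            r = (csing (Ui c j'), cpair (E c) (Sb c j'))" using memR by blast
      show "r \<in> {r1, r2}"
      proof (cases "r = (cpair (E c) (Sb c (j' - 1)), csing (Ui c j'))")
        case True
        have jl': "j' - 1 \<le> L c" using c by linarith
        have ne: "E c \<noteq> Sb c (j' - 1)" using E_ne_Sb[OF c(1) jl'] .
        have "1 \<le> a \<and> ((E c = Y \<and> Sb c (j' - 1) = U) \<or> (E c = U \<and> Sb c (j' - 1) = Y))"
          using cpair_le[OF cond[unfolded True fst_conv T_def] ne UY] .
        moreover have "U \<noteq> Sb c (j' - 1)" unfolding U_def using ui_ne_Sb[OF c0 j c(1) jl'] .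
        moreover have "U \<noteq> E c" unfolding U_def using ui_ne_E[OF c0 j c(1)] .
        ultimately show ?thesis by auto
      next
        case False
        then have fr: "fst r = csing (Ui c j')" using r by auto
        have "Ui c j' = U \<or> (Ui c j' = Y \<and> 1 \<le> a)"
          using csing_le[OF cond[unfolded fr T_def]] .
        moreover have "Ui c j' \<noteq> Y" unfolding Y_def using ui_ne_E[OF c c0] .
        ultimately have "Ui c j' = Ui c0 j" unfolding U_def by auto
        then have "c = c0 \<and> j' = j" using ui_inj[OF c(1) c0 c(2,3) j] by auto
        then show ?thesis using r False unfolding r1_def r2_def U_def Y_def S1_def S2_def by auto
      qed
    qed
  qed
  have r12: "r1 \<noteq> r2"
  proof
    assume "r1 = r2"
    then have "cpair Y S1 = cpair Y S2" unfolding r1_def r2_def by simp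
    then have "S1 = S2 \<or> Y = S2" by (auto simp: cpair_eq_iff)
    moreover have "S1 \<noteq> S2" unfolding S1_def S2_def using sb_inj[OF c0 jl j(2)] j by fastforce
    ultimately show False using S2Y by auto
  qed
  have "Poly_Mapping.lookup (total_deriv R \<kappa> p) T = (\<Sum>r\<in>R. if (\<exists>l. T = l + fst r) then g r else 0)"
    unfolding lookup_total_deriv g_def ..
  also have "\<dots> = (\<Sum>r\<in>{r\<in>R. \<exists>l. T = l + fst r}. g r)" using finR by (rule sum_if_filter)
  also have "\<dots> = g r1 + g r2" unfolding set using r12 by simp
  also have "T - fst r1 = Poly_Mapping.single Y a" "T - fst r2 = Poly_Mapping.single Y a"
    unfolding T_def r1_def r2_def csing_def by simp_all
  then have "g r1 + g r2 = \<kappa> r1 * (h Y + h S1 - h U) + \<kappa> r2 * (h Y + h S2 - h U)"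
    unfolding g_def h_def[abs_def] unfolding r1_def r2_def fst_conv snd_conv
    using react_sum_U_pair[OF finSp sp(1,2,3)] react_sum_U_pair[OF finSp sp(1,2,4)]
    by simp
  also have "h Y = 0" unfolding h_def using pY by (simp add: single_add[symmetric] Y_def)
  also have "h S1 = Poly_Mapping.lookup p (Poly_Mapping.single Y a + Poly_Mapping.single S1 1)"
    unfolding h_def using S1Y by (simp add: lookup_single when_def)
  also have "h S2 = Poly_Mapping.lookup p (Poly_Mapping.single Y a + Poly_Mapping.single S2 1)"
    unfolding h_def using S2Y by (simp add: lookup_single when_def)
  also have "h U = Poly_Mapping.lookup p (Poly_Mapping.single Y a + Poly_Mapping.single U 1)"
    unfolding h_def using UY by (simp add: lookup_single when_def)
  finally show ?thesis unfolding T_def r1_def r2_def Y_def U_def S1_def S2_def by simp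
qed


lemma FS:
  assumes i: "i \<le> L c0" and pY: "Poly_Mapping.lookup p (Poly_Mapping.single (E c0) a) = 0"
  shows "Poly_Mapping.lookup (total_deriv R \<kappa> p) (Poly_Mapping.single (E c0) a + Poly_Mapping.single (Sb c0 i) 1) =
    (if 1 \<le> a \<and> i < L c0 then \<kappa> (cpair (E c0) (Sb c0 i), csing (Ui c0 (Suc i))) *
        (Poly_Mapping.lookup p (Poly_Mapping.single (E c0) (a - 1) + Poly_Mapping.single (Ui c0 (Suc i)) 1)
         - Poly_Mapping.lookup p (Poly_Mapping.single (E c0) (a - 1) + Poly_Mapping.single (Sb c0 i) 1))
     else 0)"
proof -
  define Y where "Y = E c0"
  define S where "S = Sb c0 i"
  define U where "U = Ui c0 (Suc i)"
  define T where "T = Poly_Mapping.single Y a + Poly_Mapping.single S (1::nat)"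
  define r3 where "r3 = (cpair Y S, csing U)"
  define g where "g r = \<kappa> r *
       (\<Sum>i\<in>species R. real (Poly_Mapping.lookup (T - fst r) i + 1)
           * Poly_Mapping.lookup p (T - fst r + Poly_Mapping.single i 1)
           * (real (Poly_Mapping.lookup (snd r) i) - real (Poly_Mapping.lookup (fst r) i)))" for r
  have SY: "S \<noteq> Y" unfolding S_def Y_def using E_ne_Sb[OF c0 i] by (rule not_sym)
  have A: "\<forall>r\<in>R. (\<exists>l. T = l + fst r) \<longrightarrow> (1 \<le> a \<and> i < L c0 \<and> r = r3)"
  proof (intro ballI impI)
    fix r assume rR: "r \<in> R" and cond: "\<exists>l. T = l + fst r"
    from rR obtain c j' where c: "c \<in> C" "1 \<le> j'" "j' \<le> L c" and
      r: "r = (cpair (E c) (Sb c (j' - 1)), csing (Ui c j')) \<or>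
          r = (csing (Ui c j'), cpair (E c) (Sb c (j' - 1))) \<or>
          r = (csing (Ui c j'), cpair (E c) (Sb c j'))" using memR by blast
    show "1 \<le> a \<and> i < L c0 \<and> r = r3"
    proof (cases "r = (cpair (E c) (Sb c (j' - 1)), csing (Ui c j'))")
      case True
      have jl': "j' - 1 \<le> L c" using c by linarith
      have ne: "E c \<noteq> Sb c (j' - 1)" using E_ne_Sb[OF c(1) jl'] .
      have cp: "1 \<le> a \<and> ((E c = Y \<and> Sb c (j' - 1) = S) \<or> (E c = S \<and> Sb c (j' - 1) = Y))"
        using cpair_le[OF cond[unfolded True fst_conv T_def] ne SY] .
      then have "cpair (E c) (Sb c (j' - 1)) = cpair (E c0) (Sb c0 i)"
        unfolding Y_def S_def by (auto simp: cpair_eq_iff)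
      then have cc: "c = c0" using cpair_uniq[OF c(1) c0 jl' i] by simp
      have "E c0 \<noteq> S" unfolding S_def using E_ne_Sb[OF c0 i] .
      then have "Sb c0 (j' - 1) = Sb c0 i" using cp cc unfolding Y_def S_def by auto
      then have "j' - 1 = i" using sb_inj[OF c0, of "j' - 1" i] jl' cc i by simp
      then have "j' = Suc i" using c by linarith
      then show ?thesis using cp True cc c unfolding r3_def Y_def S_def U_def by auto
    next
      case False
      then have fr: "fst r = csing (Ui c j')" using r by auto
      have "Ui c j' = S \<or> (Ui c j' = Y \<and> 1 \<le> a)"
        using csing_le[OF cond[unfolded fr T_def]] .
      moreover have "Ui c j' \<noteq> Y" unfolding Y_def using ui_ne_E[OF c c0] .
      moreover have "Ui c j' \<noteq> S" unfolding S_def using ui_ne_Sb[OF c c0 i] .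
      ultimately show ?thesis by simp
    qed
  qed
  show ?thesis
  proof (cases "1 \<le> a \<and> i < L c0")
    case False
    have emp: "{r\<in>R. \<exists>l. T = l + fst r} = {}" using A False by auto
    have "Poly_Mapping.lookup (total_deriv R \<kappa> p) T = 0"
      unfolding lookup_total_deriv sum_if_filter[OF finR] emp by (rule sum.empty)
    then have z: "Poly_Mapping.lookup (total_deriv R \<kappa> p) (Poly_Mapping.single (E c0) a + Poly_Mapping.single (Sb c0 i) 1) = 0"
      unfolding T_def Y_def S_def .
    show ?thesis by (simp only: if_not_P[OF False] z)
  next
    case True
    have Tr: "T = Poly_Mapping.single Y (a - 1) + cpair Y S"
      using True by (intro poly_mapping_eqI) (auto simp: T_def cpair_def lookup_add lookup_single when_def)
    have "1 \<le> Suc i \<and> Suc i \<le> L c0 \<and> r3 = (cpair (E c0) (Sb c0 (Suc i - 1)), csing (Ui c0 (Suc i)))"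
      using True by (simp add: r3_def Y_def S_def U_def)
    then have r3R: "r3 \<in> R" unfolding memR using c0 by blast
    have c3: "\<exists>l. T = l + fst r3" unfolding r3_def using Tr by auto
    have set: "{r\<in>R. \<exists>l. T = l + fst r} = {r3}" using A r3R c3 by blast
    have sp1: "U \<in> species R" using in_species[OF r3R[unfolded r3_def], of U] lk_csing(1)[of U] by simp
    have sp2: "Y \<in> species R" using in_species[OF r3R[unfolded r3_def], of Y] lk_cpair1(1)[of Y S] by simp
    have sp3: "S \<in> species R" using in_species[OF r3R[unfolded r3_def], of S] lk_cpair2(1)[of Y S] by simp
    define h where "h j = real (Poly_Mapping.lookup (Poly_Mapping.single Y (a - 1)) j + 1)
           * Poly_Mapping.lookup p (Poly_Mapping.single Y (a - 1) + Poly_Mapping.single j 1)" for j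
    have "Poly_Mapping.lookup (total_deriv R \<kappa> p) T = (\<Sum>r\<in>R. if (\<exists>l. T = l + fst r) then g r else 0)"
      unfolding lookup_total_deriv g_def ..
    also have "\<dots> = (\<Sum>r\<in>{r\<in>R. \<exists>l. T = l + fst r}. g r)" using finR by (rule sum_if_filter)
    also have "\<dots> = g r3" unfolding set by simp
    also have "T - fst r3 = Poly_Mapping.single Y (a - 1)" unfolding r3_def fst_conv Tr by simp
    then have "g r3 = \<kappa> r3 * (h U - h Y - h S)"
      unfolding g_def h_def[abs_def] unfolding r3_def fst_conv snd_conv
      using react_sum_pair_U[OF finSp sp1 sp2 sp3] by simp
    also have "h Y = 0" unfolding h_def using pY True
      by (simp add: single_add[symmetric] Y_def)
    also have "h S = Poly_Mapping.lookup p (Poly_Mapping.single Y (a - 1) + Poly_Mapping.single S 1)"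
      unfolding h_def using SY by (simp add: lookup_single when_def)
    also have "h U = Poly_Mapping.lookup p (Poly_Mapping.single Y (a - 1) + Poly_Mapping.single U 1)"
      unfolding h_def using ui_ne_E[of c0 "Suc i" c0] c0 True by (simp add: lookup_single when_def U_def Y_def)
    finally show ?thesis using True unfolding T_def r3_def Y_def U_def S_def by simp
  qed
qed


definition valS :: "nat \<Rightarrow> nat \<Rightarrow> real" where
  "valS n t = (\<Prod>j<t. \<kappa> (cpair (E c0) (Sb c0 (n - j - 1)), csing (Ui c0 (n - j)))
                      * \<kappa> (csing (Ui c0 (n - j)), cpair (E c0) (Sb c0 (n - j))))"

definition Inv :: "nat \<Rightarrow> nat \<Rightarrow> 's mpoly \<Rightarrow> bool" where
  "Inv n m P \<longleftrightarrow>
    (\<forall>b. Poly_Mapping.lookup P (Poly_Mapping.single (E c0) b) = 0) \<and>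
    (\<forall>a j. 1 \<le> j \<longrightarrow> j \<le> L c0 \<longrightarrow> 2 * j + m < 2 * n + 1 \<longrightarrow>
        Poly_Mapping.lookup P (Poly_Mapping.single (E c0) a + Poly_Mapping.single (Ui c0 j) 1) = 0) \<and>
    (\<forall>a i. i \<le> L c0 \<longrightarrow> 2 * i + m < 2 * n \<longrightarrow>
        Poly_Mapping.lookup P (Poly_Mapping.single (E c0) a + Poly_Mapping.single (Sb c0 i) 1) = 0) \<and>
    (\<forall>t a. m = 2 * t + 1 \<longrightarrow> t < n \<longrightarrow>
        Poly_Mapping.lookup P (Poly_Mapping.single (E c0) a + Poly_Mapping.single (Ui c0 (n - t)) 1)
          = (if a = t then \<kappa> (csing (Ui c0 (n - t)), cpair (E c0) (Sb c0 (n - t))) * valS n t else 0)) \<and>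
    (\<forall>t a. m = 2 * t \<longrightarrow> t \<le> n \<longrightarrow>
        Poly_Mapping.lookup P (Poly_Mapping.single (E c0) a + Poly_Mapping.single (Sb c0 (n - t)) 1)
          = (if a = t then valS n t else 0))"

lemma mono_eq:
  assumes "X \<noteq> Y"
  shows "Poly_Mapping.single X (1::nat) = Poly_Mapping.single Y a + Poly_Mapping.single Z 1 \<longleftrightarrow> Z = X \<and> a = 0"
proof
  assume h: "Poly_Mapping.single X (1::nat) = Poly_Mapping.single Y a + Poly_Mapping.single Z 1"
  have "\<And>W. Poly_Mapping.lookup (Poly_Mapping.single X (1::nat)) W = Poly_Mapping.lookup (Poly_Mapping.single Y a + Poly_Mapping.single Z 1) W"
    using h by simp
  from this[of X] this[of Y] assms show "Z = X \<and> a = 0"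
    by (auto simp: lookup_add lookup_single when_def split: if_splits)
qed simp

lemma mono_neY:
  assumes "X \<noteq> Y"
  shows "Poly_Mapping.single X (1::nat) \<noteq> Poly_Mapping.single Y b"
proof
  assume h: "Poly_Mapping.single X (1::nat) = Poly_Mapping.single Y b"
  have "Poly_Mapping.lookup (Poly_Mapping.single X (1::nat)) X = Poly_Mapping.lookup (Poly_Mapping.single Y b) X"
    using h by simp
  with assms show False by (simp add: lookup_single when_def)
qed

lemma Inv_base:
  assumes n: "1 \<le> n" "n \<le> L c0"
  shows "Inv n 0 (var (Sb c0 n))"
proof -
  have lk: "Poly_Mapping.lookup (var (Sb c0 n)) M = (if Poly_Mapping.single (Sb c0 n) 1 = M then 1 else 0)" for M
    by (simp add: var_def lookup_single when_def)
  have SY: "Sb c0 n \<noteq> E c0" using E_ne_Sb[OF c0 n(2)] by (rule not_sym)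
  show ?thesis unfolding Inv_def
  proof (intro conjI allI impI)
    fix b show "Poly_Mapping.lookup (var (Sb c0 n)) (Poly_Mapping.single (E c0) b) = 0"
      unfolding lk using mono_neY[OF SY] by simp
  next
    fix a j assume j: "1 \<le> j" "j \<le> L c0"
    have "Ui c0 j \<noteq> Sb c0 n" using ui_ne_Sb[OF c0 j c0 n(2)] .
    then show "Poly_Mapping.lookup (var (Sb c0 n)) (Poly_Mapping.single (E c0) a + Poly_Mapping.single (Ui c0 j) 1) = 0"
      unfolding lk mono_eq[OF SY] by simp
  next
    fix a i assume i: "i \<le> L c0" "2 * i + 0 < 2 * n"
    have "Sb c0 i \<noteq> Sb c0 n" using sb_inj[OF c0 i(1) n(2)] i(2) by auto
    then show "Poly_Mapping.lookup (var (Sb c0 n)) (Poly_Mapping.single (E c0) a + Poly_Mapping.single (Sb c0 i) 1) = 0"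
      unfolding lk mono_eq[OF SY] by simp
  next
    fix t a assume "(0::nat) = 2 * t + 1" then show "Poly_Mapping.lookup (var (Sb c0 n)) (Poly_Mapping.single (E c0) a + Poly_Mapping.single (Ui c0 (n - t)) 1)
          = (if a = t then \<kappa> (csing (Ui c0 (n - t)), cpair (E c0) (Sb c0 (n - t))) * valS n t else 0)" by simp
  next
    fix t a assume "(0::nat) = 2 * t"
    then have t0: "t = 0" by simp
    show "Poly_Mapping.lookup (var (Sb c0 n)) (Poly_Mapping.single (E c0) a + Poly_Mapping.single (Sb c0 (n - t)) 1)
          = (if a = t then valS n t else 0)"
      unfolding lk mono_eq[OF SY] t0 by (simp add: valS_def)
  qed
qed

lemma Inv_step:
  assumes n: "1 \<le> n" "n \<le> L c0" and IH: "Inv n m P"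
  shows "Inv n (Suc m) (total_deriv R \<kappa> P)"
proof -
  note I = IH[unfolded Inv_def]
  have pY: "\<forall>b. Poly_Mapping.lookup P (Poly_Mapping.single (E c0) b) = 0" using I by blast
  have I2: "\<And>a j. 1 \<le> j \<Longrightarrow> j \<le> L c0 \<Longrightarrow> 2 * j + m < 2 * n + 1 \<Longrightarrow>
        Poly_Mapping.lookup P (Poly_Mapping.single (E c0) a + Poly_Mapping.single (Ui c0 j) 1) = 0"
    using I by blast
  have I3: "\<And>a i. i \<le> L c0 \<Longrightarrow> 2 * i + m < 2 * n \<Longrightarrow>
        Poly_Mapping.lookup P (Poly_Mapping.single (E c0) a + Poly_Mapping.single (Sb c0 i) 1) = 0"
    using I by blast
  have I4: "\<And>t a. m = 2 * t + 1 \<Longrightarrow> t < n \<Longrightarrow>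
        Poly_Mapping.lookup P (Poly_Mapping.single (E c0) a + Poly_Mapping.single (Ui c0 (n - t)) 1)
          = (if a = t then \<kappa> (csing (Ui c0 (n - t)), cpair (E c0) (Sb c0 (n - t))) * valS n t else 0)"
    using I by blast
  have I5: "\<And>t a. m = 2 * t \<Longrightarrow> t \<le> n \<Longrightarrow>
        Poly_Mapping.lookup P (Poly_Mapping.single (E c0) a + Poly_Mapping.single (Sb c0 (n - t)) 1)
          = (if a = t then valS n t else 0)"
    using I by blast
  show ?thesis unfolding Inv_def
  proof (intro conjI allI impI)
    fix b show "Poly_Mapping.lookup (total_deriv R \<kappa> P) (Poly_Mapping.single (E c0) b) = 0"
      by (rule FY)
  next
    fix a j assume j: "1 \<le> j" "j \<le> L c0" and jm: "2 * j + Suc m < 2 * n + 1"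
    have jl: "j - 1 \<le> L c0" using j by linarith
    have "Poly_Mapping.lookup P (Poly_Mapping.single (E c0) a + Poly_Mapping.single (Sb c0 (j - 1)) 1) = 0"
      using I3[OF jl] jm j by simp
    moreover have "Poly_Mapping.lookup P (Poly_Mapping.single (E c0) a + Poly_Mapping.single (Ui c0 j) 1) = 0"
      using I2[OF j] jm by simp
    moreover have "Poly_Mapping.lookup P (Poly_Mapping.single (E c0) a + Poly_Mapping.single (Sb c0 j) 1) = 0"
      using I3[OF j(2)] jm by simp
    ultimately show "Poly_Mapping.lookup (total_deriv R \<kappa> P) (Poly_Mapping.single (E c0) a + Poly_Mapping.single (Ui c0 j) 1) = 0"
      unfolding FU[OF j pY] by simp
  next
    fix a i assume i: "i \<le> L c0" and im: "2 * i + Suc m < 2 * n"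
    show "Poly_Mapping.lookup (total_deriv R \<kappa> P) (Poly_Mapping.single (E c0) a + Poly_Mapping.single (Sb c0 i) 1) = 0"
    proof (cases "1 \<le> a \<and> i < L c0")
      case True
      have "Poly_Mapping.lookup P (Poly_Mapping.single (E c0) (a - 1) + Poly_Mapping.single (Ui c0 (Suc i)) 1) = 0"
        using I2[of "Suc i"] True im by simp
      moreover have "Poly_Mapping.lookup P (Poly_Mapping.single (E c0) (a - 1) + Poly_Mapping.single (Sb c0 i) 1) = 0"
        using I3[OF i] im by simp
      ultimately show ?thesis unfolding FS[OF i pY[rule_format]] by simp
    next
      case False
      show ?thesis unfolding FS[OF i pY[rule_format]] if_not_P[OF False] by (rule refl)
    qed
  next
    fix t a assume tm: "Suc m = 2 * t + 1" and tn: "t < n"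
    have m2: "m = 2 * t" using tm by simp
    have j: "1 \<le> n - t" "n - t \<le> L c0" using tn n by auto
    have jl: "n - t - 1 \<le> L c0" using j by linarith
    have "Poly_Mapping.lookup P (Poly_Mapping.single (E c0) a + Poly_Mapping.single (Sb c0 (n - t - 1)) 1) = 0"
      using I3[OF jl] m2 tn by simp
    moreover have "Poly_Mapping.lookup P (Poly_Mapping.single (E c0) a + Poly_Mapping.single (Ui c0 (n - t)) 1) = 0"
      using I2[OF j] m2 tn by simp
    moreover have "Poly_Mapping.lookup P (Poly_Mapping.single (E c0) a + Poly_Mapping.single (Sb c0 (n - t)) 1)
          = (if a = t then valS n t else 0)"
      using I5[OF m2] tn by simp
    ultimately show "Poly_Mapping.lookup (total_deriv R \<kappa> P) (Poly_Mapping.single (E c0) a + Poly_Mapping.single (Ui c0 (n - t)) 1)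
          = (if a = t then \<kappa> (csing (Ui c0 (n - t)), cpair (E c0) (Sb c0 (n - t))) * valS n t else 0)"
      unfolding FU[OF j pY] by simp
  next
    fix t a assume tm: "Suc m = 2 * t" and tn: "t \<le> n"
    obtain t' where t': "t = Suc t'" using tm by (cases t) auto
    have m2: "m = 2 * t' + 1" using tm t' by simp
    have t'n: "t' < n" using tn t' by simp
    define i where "i = n - t"
    have i: "i \<le> L c0" "i < L c0" using n t'n t' unfolding i_def by auto
    have si: "Suc i = n - t'" unfolding i_def t' using t'n by simp
    have i2: "n - t' - 1 = i" unfolding i_def t' by simp
    show "Poly_Mapping.lookup (total_deriv R \<kappa> P) (Poly_Mapping.single (E c0) a + Poly_Mapping.single (Sb c0 (n - t)) 1)
          = (if a = t then valS n t else 0)"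
    proof (cases "1 \<le> a")
      case False
      then show ?thesis unfolding i_def[symmetric] FS[OF i(1) pY[rule_format]] using t' by simp
    next
      case True
      have "Poly_Mapping.lookup P (Poly_Mapping.single (E c0) (a - 1) + Poly_Mapping.single (Ui c0 (Suc i)) 1)
          = (if a - 1 = t' then \<kappa> (csing (Ui c0 (n - t')), cpair (E c0) (Sb c0 (n - t'))) * valS n t' else 0)"
        unfolding si using I4[OF m2 t'n] .
      moreover have "Poly_Mapping.lookup P (Poly_Mapping.single (E c0) (a - 1) + Poly_Mapping.single (Sb c0 i) 1) = 0"
        using I3[OF i(1)] m2 t'n t' unfolding i_def by simp
      moreover have "valS n t = \<kappa> (cpair (E c0) (Sb c0 i), csing (Ui c0 (Suc i))) *
          (\<kappa> (csing (Ui c0 (n - t')), cpair (E c0) (Sb c0 (n - t'))) * valS n t')"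
      proof -
        have vs: "valS n t = valS n t' * (\<kappa> (cpair (E c0) (Sb c0 (n - t' - 1)), csing (Ui c0 (n - t')))
                      * \<kappa> (csing (Ui c0 (n - t')), cpair (E c0) (Sb c0 (n - t'))))"
          by (simp only: valS_def t' prod.lessThan_Suc)
        show ?thesis unfolding si using vs[unfolded i2] by (simp add: mult_ac)
      qed
      ultimately show ?thesis unfolding i_def[symmetric] FS[OF i(1) pY[rule_format]] using True i t'
        by auto
    qed
  qed
qed

lemma Inv_all:
  assumes n: "1 \<le> n" "n \<le> L c0"
  shows "Inv n m ((total_deriv R \<kappa> ^^ m) (var (Sb c0 n)))"
proof (induction m)
  case 0 then show ?case using Inv_base[OF n] by simp
next
  case (Suc m) then show ?case using Inv_step[OF n] by simp
qed

end

theorem mainTheorem11: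
  fixes C :: "'c set" and E :: "'c \<Rightarrow> 's" and L :: "'c \<Rightarrow> nat"
    and Sb Ui :: "'c \<Rightarrow> nat \<Rightarrow> 's"
    and \<kappa> :: "'s cplx \<times> 's cplx \<Rightarrow> real"
    and c0 :: 'c and n k :: nat
  assumes h1: "H1 C E L Sb Ui"
    and h2: "H2 C E L Sb Ui"
    and rates: "\<forall>r\<in>chain_network C E L Sb Ui. \<kappa> r > 0"
    and c0: "c0 \<in> C"
    and n: "1 \<le> n" "n \<le> L c0"
    and kn: "k \<le> n - 1"
  shows "(\<forall>m. 1 \<le> m \<longrightarrow> m < 2 * k + 1 \<longrightarrow> (\<forall>r::nat.
            coeff ((total_deriv (chain_network C E L Sb Ui) \<kappa> ^^ m) (var (Sb c0 n)))
                  (Poly_Mapping.single (E c0) r + Poly_Mapping.single (Ui c0 (n - k)) 1) = 0))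
       \<and> (\<forall>r::nat. r \<noteq> k \<longrightarrow>
            coeff ((total_deriv (chain_network C E L Sb Ui) \<kappa> ^^ (2 * k + 1)) (var (Sb c0 n)))
                  (Poly_Mapping.single (E c0) r + Poly_Mapping.single (Ui c0 (n - k)) 1) = 0)
       \<and> coeff ((total_deriv (chain_network C E L Sb Ui) \<kappa> ^^ (2 * k + 1)) (var (Sb c0 n)))
                (Poly_Mapping.single (E c0) k + Poly_Mapping.single (Ui c0 (n - k)) 1)
           = \<kappa> (csing (Ui c0 (n - k)), cpair (E c0) (Sb c0 (n - k)))
             * (\<Prod>j<k. \<kappa> (cpair (E c0) (Sb c0 (n - j - 1)), csing (Ui c0 (n - j)))
                      * \<kappa> (csing (Ui c0 (n - j)), cpair (E c0) (Sb c0 (n - j))))"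
proof -
  interpret chainctx C E L Sb Ui \<kappa> c0 by unfold_locales (rule h1, rule c0)
  have n1: "1 \<le> n" and nL: "n \<le> L c0" using n by auto
  have kn': "k < n" using kn n by linarith
  have inv: "\<And>m. Inv n m ((total_deriv (chain_network C E L Sb Ui) \<kappa> ^^ m) (var (Sb c0 n)))"
    using Inv_all[OF n1 nL] .
  have j: "1 \<le> n - k" "n - k \<le> L c0" using kn' nL by auto
  have part1: "\<forall>m. 1 \<le> m \<longrightarrow> m < 2 * k + 1 \<longrightarrow> (\<forall>r::nat.
            coeff ((total_deriv (chain_network C E L Sb Ui) \<kappa> ^^ m) (var (Sb c0 n)))
                  (Poly_Mapping.single (E c0) r + Poly_Mapping.single (Ui c0 (n - k)) 1) = 0)"
  proof (intro allI impI)
    fix m r assume m: "1 \<le> m" "m < 2 * k + 1"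
    have "2 * (n - k) + m < 2 * n + 1" using m kn' by linarith
    then show "coeff ((total_deriv (chain_network C E L Sb Ui) \<kappa> ^^ m) (var (Sb c0 n)))
                  (Poly_Mapping.single (E c0) r + Poly_Mapping.single (Ui c0 (n - k)) 1) = 0"
      using inv[of m, unfolded Inv_def] j unfolding coeff_def by blast
  qed
  have I4: "\<And>a. coeff ((total_deriv (chain_network C E L Sb Ui) \<kappa> ^^ (2 * k + 1)) (var (Sb c0 n)))
                (Poly_Mapping.single (E c0) a + Poly_Mapping.single (Ui c0 (n - k)) 1)
        = (if a = k then \<kappa> (csing (Ui c0 (n - k)), cpair (E c0) (Sb c0 (n - k))) * valS n k else 0)"
    using inv[of "2 * k + 1", unfolded Inv_def] kn' unfolding coeff_def by blast
  show ?thesis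
    using part1 I4 by (simp add: valS_def)
qed

end
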